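(* (a) The map $\Upsilon$ is a bijection from $\mathcal{D}$ to $\bar{\mathcal{D}}$. (b) $\theta_t(\bar{\mathcal{D}})\subseteq\bar{\mathcal{D}}$ for any $t\geq 0$. (c) $\Upsilon^{-1}\circ\theta_t\circ\Upsilon(\mathcal{D})\subseteq{\mathcal{D}}$ for any $t\geq 0$.
   Context: Fix $I\in\mathbb{N}$. $\mathcal{C}=\{f\in C(\mathbb{R}_+,\mathbb{R}_+):f(0)=0,f\text{ non-decreasing}\}$, $\mathcal{C}^\uparrow=\{f\in\mathcal{C}:f\text{ strictly increasing},\lim_{u\to\infty}f(u)=\infty\}$. For $\psi\in\mathcal{C}^I$, $\phi_i(u):=u-\sum_{j=1}^I2(i\wedge j)\psi_j(u)$. $\mathcal{F}:=\{\psi\in\mathcal{C}^I:\phi_I\in\mathcal{C}^\uparrow\}$; for $\psi\in\mathcal{F}$ each $\phi_i\in\mathcal{C}^\uparrow$ and $\Upsilon(\psi):=(\psi_i\circ\phi_i^{-1})_{i=1}^I$, which is a bijection $\mathcal{F}\to\mathcal{C}^I$ with inverse $\Upsilon^{-1}$. $\mathcal{D}:=\{\psi\in\mathcal{F}:\sum_{i=1}^Ii\sup_{u_1\ne u_2}\frac{\psi_i(u_1)-\psi_i(u_2)}{\phi_i(u_1)-\phi_i(u_2)}<\frac12\}$, $\bar{\mathcal{D}}:=\{\bar\psi\in\mathcal{C}^I:\sum_{i=1}^Ii\sup_{z_1\ne z_2}\frac{\bar\psi_i(z_1)-\bar\psi_i(z_2)}{z_1-z_2}<\frac12\}$. For $\bar\psi\in\mathcal{C}^I$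 and $t\ge0$, $(\theta_t\bar\psi)_i(z):=\bar\psi_i((z-it)\vee0)$. *)

theory Defs
  imports "HOL-Analysis.Analysis"
begin

text \<open>Functions R+ -> R+ are represented as real => real; only values on [0,inf) matter.
  The class C: f(0)=0, continuous, non-decreasing, non-negative on [0,inf).\<close>
definition Cfun :: "(real \<Rightarrow> real) \<Rightarrow> bool" where
  "Cfun f \<longleftrightarrow> f 0 = 0 \<and> continuous_on {0..} f \<and> mono_on {0..} f \<and> (\<forall>u\<ge>0. f u \<ge> 0)"

definition Cup :: "(real \<Rightarrow> real) \<Rightarrow> bool" where
  "Cup f \<longleftrightarrow> Cfun f \<and> strict_mono_on {0..} f \<and> filterlim f at_top at_top"

text \<open>C^I: tuples indexed by 1..I, in canonical (extensional) form: each component is 0 on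
  negative arguments, and components outside 1..I are identically 0.\<close>
definition CI :: "nat \<Rightarrow> (nat \<Rightarrow> real \<Rightarrow> real) set" where
  "CI I = {\<psi>. (\<forall>i\<in>{1..I}. Cfun (\<psi> i) \<and> (\<forall>u<0. \<psi> i u = 0)) \<and>
               (\<forall>i. i \<notin> {1..I} \<longrightarrow> \<psi> i = (\<lambda>_. 0))}"

definition phi :: "nat \<Rightarrow> (nat \<Rightarrow> real \<Rightarrow> real) \<Rightarrow> nat \<Rightarrow> real \<Rightarrow> real" where
  "phi I \<psi> i u = u - (\<Sum>j=1..I. 2 * real (min i j) * \<psi> j u)"

definition FF :: "nat \<Rightarrow> (nat \<Rightarrow> real \<Rightarrow> real) set" where
  "FF I = {\<psi>\<in>CI I. Cup (phi I \<psi> I)}"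

definition Ups :: "nat \<Rightarrow> (nat \<Rightarrow> real \<Rightarrow> real) \<Rightarrow> nat \<Rightarrow> real \<Rightarrow> real" where
  "Ups I \<psi> i z = (if i \<in> {1..I} \<and> 0 \<le> z
                    then \<psi> i (inv_into {0..} (phi I \<psi> i) z) else 0)"

definition DD :: "nat \<Rightarrow> (nat \<Rightarrow> real \<Rightarrow> real) set" where
  "DD I = {\<psi>\<in>FF I. (\<Sum>i=1..I. ereal (real i) *
      (SUP (u1,u2)\<in>{(u1,u2). 0 \<le> u1 \<and> 0 \<le> u2 \<and> u1 \<noteq> u2}.
          ereal ((\<psi> i u1 - \<psi> i u2) / (phi I \<psi> i u1 - phi I \<psi> i u2)))) < ereal (1/2)}"

definition DDbar :: "nat \<Rightarrow> (nat \<Rightarrow> real \<Rightarrow> real) set" where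
  "DDbar I = {\<psi>\<in>CI I. (\<Sum>i=1..I. ereal (real i) *
      (SUP (z1,z2)\<in>{(z1,z2). 0 \<le> z1 \<and> 0 \<le> z2 \<and> z1 \<noteq> z2}.
          ereal ((\<psi> i z1 - \<psi> i z2) / (z1 - z2)))) < ereal (1/2)}"

definition theta :: "real \<Rightarrow> (nat \<Rightarrow> real \<Rightarrow> real) \<Rightarrow> nat \<Rightarrow> real \<Rightarrow> real" where
  "theta t \<psi> i z = \<psi> i (max (z - real i * t) 0)"

end

theory Submission
  imports Defs
begin

function Zf :: "nat \<Rightarrow> (nat \<Rightarrow> real \<Rightarrow> real) \<Rightarrow> nat \<Rightarrow> real \<Rightarrow> real" where
  "Zf I f i s = s + 2 * (\<Sum>j\<in>{i<..I}. (real j - real i) * f j (Zf I f j s))"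
  by pat_completeness auto
termination by (relation "Wellfounded.measure (\<lambda>(I,f,i,s). I - i)") auto

declare Zf.simps[simp del]

lemma CI_mono:
  assumes "f \<in> CI I" "a \<le> b"
  shows "f i a \<le> f i b"
proof (cases "i \<in> {1..I}")
  case True
  then have C: "Cfun (f i)" and N: "\<forall>u<0. f i u = 0" using assms(1) by (auto simp: CI_def)
  show ?thesis
  proof (cases "a < 0")
    case True
    then have "f i a = 0" using N by auto
    moreover have "f i b \<ge> 0"
      using C N by (cases "b < 0") (auto simp: Cfun_def)
    ultimately show ?thesis by simp
  next
    case False
    then show ?thesis using C assms(2) by (auto simp: Cfun_def mono_on_def)
  qed
next
  case False
  then show ?thesis using assms(1) by (auto simp: CI_def)
qed

lemma CI_nonneg:
  assumes "f \<in> CI I"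
  shows "f i a \<ge> 0"
proof -
  have "f i (min a 0) \<le> f i a" using CI_mono[OF assms] by simp
  moreover have "f i (min a 0) = 0"
    using assms by (cases "a < 0"; cases "i \<in> {1..I}") (auto simp: CI_def Cfun_def min_def)
  ultimately show ?thesis by simp
qed

lemma CI_zero: "f \<in> CI I \<Longrightarrow> f i 0 = 0"
  by (cases "i \<in> {1..I}") (auto simp: CI_def Cfun_def)

lemma Zf_mono_diff':
  assumes mono: "\<And>i a b. a \<le> b \<Longrightarrow> f i a \<le> f i b" and ss: "s \<le> s'"
  shows "s' - s \<le> Zf I f i s' - Zf I f i s"
  using ss
proof (induction "I - i" arbitrary: i rule: less_induct)
  case less
  have "\<forall>j\<in>{i<..I}. (real j - real i) * f j (Zf I f j s) \<le> (real j - real i) * f j (Zf I f j s')"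
  proof
    fix j assume j: "j \<in> {i<..I}"
    then have "s' - s \<le> Zf I f j s' - Zf I f j s" using less by auto
    then have "Zf I f j s \<le> Zf I f j s'" using less.prems by linarith
    then have "f j (Zf I f j s) \<le> f j (Zf I f j s')" using mono by blast
    then show "(real j - real i) * f j (Zf I f j s) \<le> (real j - real i) * f j (Zf I f j s')"
      using j by (intro mult_left_mono) auto
  qed
  then have "(\<Sum>j\<in>{i<..I}. (real j - real i) * f j (Zf I f j s)) \<le> (\<Sum>j\<in>{i<..I}. (real j - real i) * f j (Zf I f j s'))"
    by (intro sum_mono) blast
  then show ?case by (subst (1 2) Zf.simps) linarith
qed

lemma Zf_mono_diff:
  assumes "f \<in> CI I" "s \<le> s'"
  shows "s' - s \<le> Zf I f i s' - Zf I f i s"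
  by (rule Zf_mono_diff'[where f=f, OF CI_mono[OF assms(1)] assms(2)])

lemma Zf_mono: "f \<in> CI I \<Longrightarrow> s \<le> s' \<Longrightarrow> Zf I f i s \<le> Zf I f i s'"
  using Zf_mono_diff[of f I s s' i] by linarith

lemma Zf_ge: 
  assumes "f \<in> CI I" shows "s \<le> Zf I f i s"
proof -
  have "0 \<le> (\<Sum>j\<in>{i<..I}. (real j - real i) * f j (Zf I f j s))"
    by (intro sum_nonneg mult_nonneg_nonneg) (auto simp: CI_nonneg[OF assms])
  then show ?thesis by (subst Zf.simps) linarith
qed

lemma Zf_zero:
  assumes "f \<in> CI I" shows "Zf I f i 0 = 0"
proof (induction "I - i" arbitrary: i rule: less_induct)
  case less
  have "(\<Sum>j\<in>{i<..I}. (real j - real i) * f j (Zf I f j 0)) = 0"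
    using less by (intro sum.neutral) (auto simp: CI_zero[OF assms])
  then show ?case by (subst Zf.simps) simp
qed

lemma Zf_cont:
  assumes "f \<in> CI I" shows "continuous_on {0..} (Zf I f i)"
proof (induction "I - i" arbitrary: i rule: less_induct)
  case less
  have "continuous_on {0..} (\<lambda>s. s + 2 * (\<Sum>j\<in>{i<..I}. (real j - real i) * f j (Zf I f j s)))"
  proof (intro continuous_intros continuous_on_sum)
    fix j assume j: "j \<in> {i<..I}"
    then have "continuous_on {0..} (Zf I f j)" using less by auto
    moreover have "Zf I f j ` {0..} \<subseteq> {0..}" using Zf_ge[OF assms, of _ j] by (auto intro: order_trans)
    moreover have "continuous_on {0..} (f j)" using assms j by (auto simp: CI_def Cfun_def)
    ultimately show "continuous_on {0..} (\<lambda>s. f j (Zf I f j s))"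
      using continuous_on_compose2[of "{0..}" "f j" "{0..}" "Zf I f j"] by blast
  qed
  then show ?case by (subst Zf.simps[abs_def]) simp
qed


definition Uf :: "nat \<Rightarrow> (nat \<Rightarrow> real \<Rightarrow> real) \<Rightarrow> real \<Rightarrow> real" where
  "Uf I f s = s + 2 * (\<Sum>j=1..I. real j * f j (Zf I f j s))"

lemma sum_split_alg:
  fixes a :: "nat \<Rightarrow> real"
  shows "(\<Sum>j=1..I. (real j - real (min i j)) * a j) = (\<Sum>j\<in>{i<..I}. (real j - real i) * a j)"
proof -
  have "(\<Sum>j\<in>{i<..I}. (real j - real i) * a j) = (\<Sum>j\<in>{i<..I}. (real j - real (min i j)) * a j)"
    by (intro sum.cong) auto
  also have "\<dots> = (\<Sum>j=1..I. (real j - real (min i j)) * a j)"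
    by (intro sum.mono_neutral_left) auto
  finally show ?thesis by simp
qed

lemma sys_alg:
  fixes a :: "nat \<Rightarrow> real"
  shows "(s + 2 * (\<Sum>j=1..I. real j * a j)) - (\<Sum>j=1..I. 2 * real (min i j) * a j)
     = s + 2 * (\<Sum>j\<in>{i<..I}. (real j - real i) * a j)"
proof -
  have "2 * (\<Sum>j=1..I. real j * a j) - (\<Sum>j=1..I. 2 * real (min i j) * a j)
      = 2 * (\<Sum>j=1..I. (real j - real (min i j)) * a j)"
    by (simp add: sum_distrib_left sum_subtractf[symmetric] algebra_simps)
  then show ?thesis using sum_split_alg[where I=I and i=i and a=a] by simp
qed

lemma sys_exists:
  "Uf I f s - (\<Sum>j=1..I. 2 * real (min i j) * f j (Zf I f j s)) = Zf I f i s"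
  unfolding Uf_def by (subst sys_alg) (subst (2) Zf.simps, simp)

lemma sys_unique:
  assumes I: "1 \<le> I"
    and z: "\<forall>i\<in>{1..I}. z i = u - (\<Sum>j=1..I. 2 * real (min i j) * f j (z j))"
  shows "(\<forall>i\<in>{1..I}. z i = Zf I f i (z I)) \<and> u = Uf I f (z I)"
proof -
  have sI: "(\<Sum>j=1..I. 2 * real (min I j) * f j (z j)) = 2 * (\<Sum>j=1..I. real j * f j (z j))"
    by (simp add: sum_distrib_left mult.assoc)
  have uI: "u = z I + 2 * (\<Sum>j=1..I. real j * f j (z j))"
  proof -
    have "I \<in> {1..I}" using I by simp
    then have "z I = u - (\<Sum>j=1..I. 2 * real (min I j) * f j (z j))" using z by blast
    then show ?thesis using sI by linarith
  qed
  have zi: "z i = z I + 2 * (\<Sum>j\<in>{i<..I}. (real j - real i) * f j (z j))" if "i \<in> {1..I}" for i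
  proof -
    have "z i = u - (\<Sum>j=1..I. 2 * real (min i j) * f j (z j))" using z that by blast
    also have "\<dots> = (z I + 2 * (\<Sum>j=1..I. real j * f j (z j))) - (\<Sum>j=1..I. 2 * real (min i j) * f j (z j))"
      by (simp only: uI[symmetric])
    also have "\<dots> = z I + 2 * (\<Sum>j\<in>{i<..I}. (real j - real i) * f j (z j))"
      by (rule sys_alg)
    finally show ?thesis .
  qed
  have A: "\<forall>i\<in>{1..I}. z i = Zf I f i (z I)"
  proof
    fix i assume "i \<in> {1..I}"
    then show "z i = Zf I f i (z I)"
    proof (induction "I - i" arbitrary: i rule: less_induct)
      case less
      have "(\<Sum>j\<in>{i<..I}. (real j - real i) * f j (z j)) = (\<Sum>j\<in>{i<..I}. (real j - real i) * f j (Zf I f j (z I)))"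
        proof (intro sum.cong refl)
        fix j assume j: "j \<in> {i<..I}"
        then have "I - j < I - i" "j \<in> {1..I}" using less.prems by auto
        then show "(real j - real i) * f j (z j) = (real j - real i) * f j (Zf I f j (z I))"
          using less.hyps[of j] by simp
      qed
      then show ?case using zi[OF less.prems] by (subst Zf.simps) simp
    qed
  qed
  have "(\<Sum>j=1..I. real j * f j (z j)) = (\<Sum>j=1..I. real j * f j (Zf I f j (z I)))"
  proof (rule sum.cong[OF refl])
    fix j assume "j \<in> {1..I}"
    then have "z j = Zf I f j (z I)" using A by blast
    then show "real j * f j (z j) = real j * f j (Zf I f j (z I))" by simp
  qed
  then show ?thesis using A uI unfolding Uf_def by argo
qed

lemma Uf_mono_diff':
  assumes mono: "\<And>i a b. a \<le> b \<Longrightarrow> f i a \<le> f i b" and ss: "s \<le> s'"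
  shows "s' - s \<le> Uf I f s' - Uf I f s"
proof -
  have "Zf I f j s \<le> Zf I f j s'" for j using Zf_mono_diff'[where f=f and I=I and i=j, OF mono ss] ss by linarith
  then have "(\<Sum>j=1..I. real j * f j (Zf I f j s)) \<le> (\<Sum>j=1..I. real j * f j (Zf I f j s'))"
    by (intro sum_mono mult_left_mono mono) auto
  then show ?thesis by (simp add: Uf_def)
qed

lemma Uf_mono_diff:
  assumes "f \<in> CI I" "s \<le> s'"
  shows "s' - s \<le> Uf I f s' - Uf I f s"
  by (rule Uf_mono_diff'[where f=f, OF CI_mono[OF assms(1)] assms(2)])

lemma Uf_zero: "f \<in> CI I \<Longrightarrow> Uf I f 0 = 0"
  by (simp add: Uf_def Zf_zero CI_zero)

lemma Uf_cont:
  assumes f: "f \<in> CI I" shows "continuous_on {0..} (Uf I f)"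
proof -
  have "continuous_on {0..} (\<lambda>s. s + 2 * (\<Sum>j=1..I. real j * f j (Zf I f j s)))"
  proof (intro continuous_intros continuous_on_sum)
    fix j assume j: "j \<in> {1..I}"
    have "continuous_on {0..} (Zf I f j)" using Zf_cont[OF f] .
    moreover have "Zf I f j ` {0..} \<subseteq> {0..}" using Zf_ge[OF f, of _ j] by (auto intro: order_trans)
    moreover have "continuous_on {0..} (f j)" using f j by (auto simp: CI_def Cfun_def)
    ultimately show "continuous_on {0..} (\<lambda>s. f j (Zf I f j s))"
      using continuous_on_compose2[of "{0..}" "f j" "{0..}" "Zf I f j"] by blast
  qed
  then show ?thesis by (simp add: Uf_def[abs_def])
qed


lemma cont_surj:
  fixes g :: "real \<Rightarrow> real"
  assumes "continuous_on {0..} g" "g 0 = 0" "filterlim g at_top at_top" "0 \<le> z"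
  shows "\<exists>u\<ge>0. g u = z"
proof -
  have "eventually (\<lambda>x. z \<le> g x) at_top" using assms(3) by (simp add: filterlim_at_top)
  then obtain N where N: "\<And>x. x \<ge> N \<Longrightarrow> z \<le> g x" by (auto simp: eventually_at_top_linorder)
  let ?b = "max N 0"
  have "continuous_on {0..?b} g" using assms(1) by (rule continuous_on_subset) auto
  then obtain x where "0 \<le> x" "x \<le> ?b" "g x = z"
    using IVT'[of g 0 z ?b] N[of ?b] assms by auto
  then show ?thesis by auto
qed

lemma Cup_inv:
  assumes "Cup g" "0 \<le> z"
  shows "0 \<le> inv_into {0..} g z" "g (inv_into {0..} g z) = z"
proof -
  have "z \<in> g ` {0..}" using cont_surj[of g z] assms by (auto simp: Cup_def Cfun_def)
  then show "0 \<le> inv_into {0..} g z" "g (inv_into {0..} g z) = z"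
    using inv_into_into[of z g "{0..}"] f_inv_into_f[of z g "{0..}"] by auto
qed

lemma Cup_inj: "Cup g \<Longrightarrow> inj_on g {0..}"
  unfolding Cup_def using strict_mono_on_imp_inj_on by blast

lemma Cup_inv_f: "Cup g \<Longrightarrow> 0 \<le> u \<Longrightarrow> inv_into {0..} g (g u) = u"
  using Cup_inj inv_into_f_f by fastforce

lemma Cup_nonneg: "Cup g \<Longrightarrow> 0 \<le> u \<Longrightarrow> 0 \<le> g u"
  by (auto simp: Cup_def Cfun_def)

lemma Cup_less: "Cup g \<Longrightarrow> 0 \<le> u \<Longrightarrow> 0 \<le> v \<Longrightarrow> u < v \<Longrightarrow> g u < g v"
  by (auto simp: Cup_def strict_mono_on_def)

lemma Cup_le: assumes "Cup g" "0 \<le> u" "0 \<le> v" shows "g u \<le> g v \<longleftrightarrow> u \<le> v"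
proof
  assume "g u \<le> g v" then show "u \<le> v" using Cup_less[OF assms(1,3,2)] by (meson linorder_not_le)
next
  assume "u \<le> v" then show "g u \<le> g v" using Cup_less[OF assms(1,2,3)] by (cases "u = v") auto
qed

lemma Uf_Cup:
  assumes f: "f \<in> CI I" shows "Cup (Uf I f)"
proof -
  have ge: "s \<le> Uf I f s" if "0 \<le> s" for s
    using Uf_mono_diff[OF f that] Uf_zero[OF f] by simp
  show ?thesis unfolding Cup_def Cfun_def
  proof (intro conjI allI impI)
    show "Uf I f 0 = 0" by (rule Uf_zero[OF f])
    show "continuous_on {0..} (Uf I f)" by (rule Uf_cont[OF f])
    show "mono_on {0..} (Uf I f)"
    proof (intro mono_onI)
      fix r s :: real assume "r \<le> s"
      with Uf_mono_diff[OF f this] show "Uf I f r \<le> Uf I f s" by linarith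
    qed
    show "0 \<le> Uf I f u" if "0 \<le> u" for u using ge[OF that] that by simp
    show "strict_mono_on {0..} (Uf I f)"
    proof (intro strict_mono_onI)
      fix r s :: real assume "r < s"
      with Uf_mono_diff[OF f, of r s] show "Uf I f r < Uf I f s" by linarith
    qed
    show "filterlim (Uf I f) at_top at_top"
      by (rule filterlim_at_top_mono[OF filterlim_ident])
         (use eventually_mono[OF eventually_ge_at_top[of "0::real"] ge] in simp)
  qed
qed

definition Vf :: "nat \<Rightarrow> (nat \<Rightarrow> real \<Rightarrow> real) \<Rightarrow> real \<Rightarrow> real" where
  "Vf I f = inv_into {0..} (Uf I f)"

lemma Vf_props:
  assumes f: "f \<in> CI I" and u: "0 \<le> u"
  shows "0 \<le> Vf I f u" "Uf I f (Vf I f u) = u"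
  using Cup_inv[OF Uf_Cup[OF f] u] by (auto simp: Vf_def)

lemma Vf_Uf: "f \<in> CI I \<Longrightarrow> 0 \<le> s \<Longrightarrow> Vf I f (Uf I f s) = s"
  using Cup_inv_f[OF Uf_Cup] by (simp add: Vf_def)

lemma Vf_Cup:
  assumes f: "f \<in> CI I" shows "Cup (Vf I f)"
proof -
  note P = Vf_props[OF f]
  have le: "Vf I f u \<le> Vf I f v \<longleftrightarrow> u \<le> v" if "0 \<le> u" "0 \<le> v" for u v
    using Cup_le[OF Uf_Cup[OF f] P(1)[OF that(1)] P(1)[OF that(2)]] P(2) that by simp
  have lip: "dist (Vf I f u) (Vf I f v) \<le> 1 * dist u v" if "0 \<le> u" "0 \<le> v" "u \<le> v" for u v
  proof -
    have "Vf I f v - Vf I f u \<le> Uf I f (Vf I f v) - Uf I f (Vf I f u)"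
      using Uf_mono_diff[OF f, of "Vf I f u" "Vf I f v"] le[OF that(1,2)] that by simp
    then show ?thesis using P(2)[OF that(1)] P(2)[OF that(2)] le[OF that(1,2)] that
      by (simp add: dist_real_def)
  qed
  have "1-lipschitz_on {0..} (Vf I f)"
  proof (rule lipschitz_onI)
    fix x y :: real assume "x \<in> {0..}" "y \<in> {0..}"
    then show "dist (Vf I f x) (Vf I f y) \<le> 1 * dist x y"
      using lip[of x y] lip[of y x] by (cases "x \<le> y") (auto simp: dist_commute)
  qed simp
  then have cont: "continuous_on {0..} (Vf I f)" by (rule lipschitz_on_continuous_on)
  have z: "Vf I f 0 = 0" using Vf_Uf[OF f, of 0] Uf_zero[OF f] by simp
  show ?thesis unfolding Cup_def Cfun_def
  proof (intro conjI allI impI)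
    show "Vf I f 0 = 0" by (rule z)
    show "continuous_on {0..} (Vf I f)" by (rule cont)
    show "mono_on {0..} (Vf I f)" by (intro mono_onI) (use le in auto)
    show "0 \<le> Vf I f u" if "0 \<le> u" for u using P(1)[OF that] .
    show "strict_mono_on {0..} (Vf I f)"
      by (intro strict_mono_onI) (use le in \<open>auto simp: less_le_not_le\<close>)
    show "filterlim (Vf I f) at_top at_top"
      unfolding filterlim_at_top
    proof
      fix Z :: real
      have "eventually (\<lambda>x. Uf I f (max Z 0) \<le> x) at_top" by (rule eventually_ge_at_top)
      then show "eventually (\<lambda>x. Z \<le> Vf I f x) at_top"
      proof (rule eventually_mono)
        fix x assume x: "Uf I f (max Z 0) \<le> x"
        have "0 \<le> Uf I f (max Z 0)" using Cup_nonneg[OF Uf_Cup[OF f]] by simp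
        then have "0 \<le> x" using x by simp
        have "Vf I f (Uf I f (max Z 0)) \<le> Vf I f x"
          using le[OF \<open>0 \<le> Uf I f (max Z 0)\<close> \<open>0 \<le> x\<close>] x by simp
        then show "Z \<le> Vf I f x" using Vf_Uf[OF f, of "max Z 0"] by simp
      qed
    qed
  qed
qed


lemma phi_diff:
  "phi I \<psi> i u = phi I \<psi> I u + 2 * (\<Sum>j=1..I. (real (min I j) - real (min i j)) * \<psi> j u)"
  unfolding phi_def by (simp add: sum_subtractf sum_distrib_left algebra_simps)

lemma phi_Cup:
  assumes psi: "\<psi> \<in> FF I" and i: "i \<in> {1..I}"
  shows "Cup (phi I \<psi> i)"
proof -
  have CI: "\<psi> \<in> CI I" and CupI: "Cup (phi I \<psi> I)" using psi by (auto simp: FF_def)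
  define D where "D u = (\<Sum>j=1..I. (real (min I j) - real (min i j)) * \<psi> j u)" for u
  have pd: "phi I \<psi> i u = phi I \<psi> I u + 2 * D u" for u unfolding D_def by (rule phi_diff)
  have Dnn: "0 \<le> D u" for u unfolding D_def
    by (intro sum_nonneg mult_nonneg_nonneg) (use i CI_nonneg[OF CI] in auto)
  have Dmono: "D u \<le> D v" if "u \<le> v" for u v unfolding D_def
    by (intro sum_mono mult_left_mono CI_mono[OF CI that]) (use i in auto)
  show ?thesis unfolding Cup_def Cfun_def
  proof (intro conjI allI impI)
    show "phi I \<psi> i 0 = 0" by (simp add: phi_def CI_zero[OF CI])
    show "continuous_on {0..} (phi I \<psi> i)" unfolding phi_def[abs_def]
      by (intro continuous_intros continuous_on_sum) (use CI in \<open>auto simp: CI_def Cfun_def\<close>)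
    show "mono_on {0..} (phi I \<psi> i)"
    proof (intro mono_onI)
      fix r s :: real assume "r \<in> {0..}" "s \<in> {0..}" "r \<le> s"
      then have "phi I \<psi> I r \<le> phi I \<psi> I s" using Cup_le[OF CupI] by simp
      then show "phi I \<psi> i r \<le> phi I \<psi> i s" using Dmono[OF \<open>r \<le> s\<close>] pd by simp
    qed
    show "0 \<le> phi I \<psi> i u" if "0 \<le> u" for u
      using Cup_nonneg[OF CupI that] Dnn[of u] pd[of u] by simp
    show "strict_mono_on {0..} (phi I \<psi> i)"
    proof (intro strict_mono_onI)
      fix r s :: real assume "r \<in> {0..}" "s \<in> {0..}" "r < s"
      then have "phi I \<psi> I r < phi I \<psi> I s" using Cup_less[OF CupI] by simp
      then show "phi I \<psi> i r < phi I \<psi> i s" using Dmono[of r s] \<open>r < s\<close> pd by simp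
    qed
    show "filterlim (phi I \<psi> i) at_top at_top"
      by (rule filterlim_at_top_mono[of "phi I \<psi> I"])
         (use CupI pd Dnn in \<open>auto simp: Cup_def intro: always_eventually\<close>)
  qed
qed

lemma Ups_phi:
  assumes psi: "\<psi> \<in> FF I" and i: "i \<in> {1..I}" and u: "0 \<le> u"
  shows "Ups I \<psi> i (phi I \<psi> i u) = \<psi> i u"
  using phi_Cup[OF psi i] Cup_nonneg[OF phi_Cup[OF psi i] u] Cup_inv_f[OF phi_Cup[OF psi i] u] i
  by (simp add: Ups_def)


definition PP :: "(real \<times> real) set" where "PP = {(a,b). 0 \<le> a \<and> 0 \<le> b \<and> a \<noteq> b}"

definition Lb :: "(real \<Rightarrow> real) \<Rightarrow> ereal" where
  "Lb g = (SUP (z1,z2)\<in>{(z1,z2). 0 \<le> z1 \<and> 0 \<le> z2 \<and> z1 \<noteq> z2}. ereal ((g z1 - g z2) / (z1 - z2)))"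

lemma DDbar_iff: "\<psi> \<in> DDbar I \<longleftrightarrow> \<psi> \<in> CI I \<and> (\<Sum>i=1..I. ereal (real i) * Lb (\<psi> i)) < ereal (1/2)"
  by (simp add: DDbar_def Lb_def)

lemma SUP_eq_FF:
  assumes psi: "\<psi> \<in> FF I" and i: "i \<in> {1..I}"
  shows "(SUP (u1,u2)\<in>{(u1,u2). 0 \<le> u1 \<and> 0 \<le> u2 \<and> u1 \<noteq> u2}.
          ereal ((\<psi> i u1 - \<psi> i u2) / (phi I \<psi> i u1 - phi I \<psi> i u2))) = Lb (Ups I \<psi> i)"
proof -
  note C = phi_Cup[OF psi i]
  let ?F = "\<lambda>(u1,u2). ereal ((\<psi> i u1 - \<psi> i u2) / (phi I \<psi> i u1 - phi I \<psi> i u2))"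
  let ?G = "\<lambda>(z1,z2). ereal ((Ups I \<psi> i z1 - Ups I \<psi> i z2) / (z1 - z2))"
  let ?P = "{(u1,u2). 0 \<le> (u1::real) \<and> 0 \<le> u2 \<and> u1 \<noteq> u2}"
  have "?F ` ?P = ?G ` ?P"
  proof (intro equalityI subsetI)
    fix x assume "x \<in> ?F ` ?P"
    then obtain u1 u2 where u: "0 \<le> u1" "0 \<le> u2" "u1 \<noteq> u2" and x: "x = ?F (u1,u2)" by auto
    have ne: "phi I \<psi> i u1 \<noteq> phi I \<psi> i u2" using Cup_inj[OF C] u by (auto simp: inj_on_def)
    have "x = ?G (phi I \<psi> i u1, phi I \<psi> i u2)" using x Ups_phi[OF psi i] u by simp
    moreover have "(phi I \<psi> i u1, phi I \<psi> i u2) \<in> ?P" using ne Cup_nonneg[OF C] u by auto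
    ultimately show "x \<in> ?G ` ?P" by blast
  next
    fix x assume "x \<in> ?G ` ?P"
    then obtain z1 z2 where z: "0 \<le> z1" "0 \<le> z2" "z1 \<noteq> z2" and x: "x = ?G (z1,z2)" by auto
    let ?v = "inv_into {0..} (phi I \<psi> i)"
    have "(?v z1, ?v z2) \<in> ?P" using Cup_inv[OF C] z by auto metis
    moreover have "x = ?F (?v z1, ?v z2)" using x Cup_inv[OF C] z i by (simp add: Ups_def)
    ultimately show "x \<in> ?F ` ?P" by blast
  qed
  then show ?thesis unfolding Lb_def by simp
qed

lemma DD_iff:
  assumes psi: "\<psi> \<in> FF I"
  shows "\<psi> \<in> DD I \<longleftrightarrow> (\<Sum>i=1..I. ereal (real i) * Lb (Ups I \<psi> i)) < ereal (1/2)"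
proof -
  have "(\<Sum>i=1..I. ereal (real i) * (SUP (u1,u2)\<in>{(u1,u2). 0 \<le> u1 \<and> 0 \<le> u2 \<and> u1 \<noteq> u2}.
          ereal ((\<psi> i u1 - \<psi> i u2) / (phi I \<psi> i u1 - phi I \<psi> i u2))))
     = (\<Sum>i=1..I. ereal (real i) * Lb (Ups I \<psi> i))"
    by (intro sum.cong refl) (simp add: SUP_eq_FF[OF psi])
  then show ?thesis using psi by (simp add: DD_def)
qed

lemma Lb_nonneg:
  assumes "mono_on {0..} g" shows "0 \<le> Lb g"
proof -
  have "ereal ((g 1 - g 0) / (1 - 0)) \<le> Lb g" unfolding Lb_def
    by (rule SUP_upper2[of "(1,0)"]) auto
  moreover have "g 0 \<le> g 1" using assms by (auto simp: mono_on_def)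
  ultimately show ?thesis by (simp add: order_trans[rotated])
qed

lemma Lb_term_finite:
  assumes "(\<Sum>i=1..I. ereal (real i) * L i) < ereal (1/2)" "\<forall>i\<in>{1..I}. 0 \<le> L i" "i \<in> {1..I}"
  shows "L i \<noteq> \<infinity>"
proof
  assume inf: "L i = \<infinity>"
  have "(\<Sum>j\<in>{i}. ereal (real j) * L j) \<le> (\<Sum>j=1..I. ereal (real j) * L j)"
    using assms(2,3) by (intro sum_mono2) auto
  then have "ereal (real i) * L i < ereal (1/2)" using assms(1) by simp
  moreover have "ereal (real i) * L i = \<infinity>" using inf assms(3) by simp
  ultimately show False by simp
qed

lemma Lb_cont:
  assumes m: "mono_on {0..} g" and fin: "Lb g \<noteq> \<infinity>"
  shows "continuous_on {0..} g"
proof -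
  obtain L where L: "Lb g = ereal L" using fin Lb_nonneg[OF m] by (cases "Lb g") auto
  have L0: "0 \<le> L" using Lb_nonneg[OF m] L by simp
  have "L-lipschitz_on {0..} g"
  proof (rule lipschitz_onI[OF _ L0])
    fix x y :: real assume xy: "x \<in> {0..}" "y \<in> {0..}"
    show "dist (g x) (g y) \<le> L * dist x y"
    proof (cases "x = y")
      case False
      let ?q = "(g x - g y) / (x - y)"
      have "ereal ?q \<le> Lb g" unfolding Lb_def
        by (rule SUP_upper2[of "(x,y)"]) (use xy False in auto)
      then have qL: "?q \<le> L" using L by simp
      have q0: "0 \<le> ?q"
      proof (cases "x \<le> y")
        case True
        then have "g x \<le> g y" using m xy by (auto simp: mono_on_def)
        then show ?thesis using True by (intro divide_nonpos_nonpos) auto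
      next
        case f: False
        then have "g y \<le> g x" using m xy by (auto simp: mono_on_def)
        then show ?thesis using f by (intro divide_nonneg_nonneg) auto
      qed
      have "g x - g y = ?q * (x - y)" using False by simp
      then have "\<bar>g x - g y\<bar> = \<bar>?q * (x - y)\<bar>" by (rule arg_cong)
      also have "\<dots> = ?q * \<bar>x - y\<bar>" using q0 by (simp only: abs_mult abs_of_nonneg)
      also have "\<dots> \<le> L * \<bar>x - y\<bar>" using qL by (intro mult_right_mono) auto
      finally show ?thesis by (simp add: dist_real_def)
    qed simp
  qed
  then show ?thesis by (rule lipschitz_on_continuous_on)
qed


lemma Ups_mono_all:
  assumes psi: "\<psi> \<in> FF I" and ab: "a \<le> b"
  shows "Ups I \<psi> i a \<le> Ups I \<psi> i b"
proof (cases "i \<in> {1..I}")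
  case i: True
  note C = phi_Cup[OF psi i]
  have CI: "\<psi> \<in> CI I" using psi by (simp add: FF_def)
  show ?thesis
  proof (cases "0 \<le> a")
    case True
    have b: "0 \<le> b" using True ab by simp
    have "phi I \<psi> i (inv_into {0..} (phi I \<psi> i) a) \<le> phi I \<psi> i (inv_into {0..} (phi I \<psi> i) b)"
      using Cup_inv(2)[OF C True] Cup_inv(2)[OF C b] ab by simp
    then have "inv_into {0..} (phi I \<psi> i) a \<le> inv_into {0..} (phi I \<psi> i) b"
      using Cup_le[OF C Cup_inv(1)[OF C True] Cup_inv(1)[OF C b]] by simp
    then have "\<psi> i (inv_into {0..} (phi I \<psi> i) a) \<le> \<psi> i (inv_into {0..} (phi I \<psi> i) b)"
      using CI_mono[OF CI] by blast
    then show ?thesis using True b i by (simp add: Ups_def)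
  next
    case False
    then show ?thesis using CI_nonneg[OF CI] by (simp add: Ups_def)
  qed
next
  case False
  then show ?thesis by (auto simp: Ups_def)
qed

lemma Ups_CI:
  assumes psi: "\<psi> \<in> DD I"
  shows "Ups I \<psi> \<in> CI I"
proof -
  have FF: "\<psi> \<in> FF I" and CI: "\<psi> \<in> CI I" using psi by (auto simp: DD_def FF_def)
  have mono: "mono_on {0..} (Ups I \<psi> i)" for i
    by (intro mono_onI Ups_mono_all[OF FF])
  have sum: "(\<Sum>i=1..I. ereal (real i) * Lb (Ups I \<psi> i)) < ereal (1/2)"
    using DD_iff[OF FF] psi by simp
  have fin: "Lb (Ups I \<psi> i) \<noteq> \<infinity>" if "i \<in> {1..I}" for i
    by (rule Lb_term_finite[OF sum _ that]) (use Lb_nonneg[OF mono] in auto)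
  have "Cfun (Ups I \<psi> i) \<and> (\<forall>u<0. Ups I \<psi> i u = 0)" if i: "i \<in> {1..I}" for i
  proof -
    note C = phi_Cup[OF FF i]
    have "phi I \<psi> i 0 = 0" using C by (simp add: Cup_def Cfun_def)
    then have "inv_into {0..} (phi I \<psi> i) 0 = 0" using Cup_inv_f[OF C, of 0] by simp
    then have z: "Ups I \<psi> i 0 = 0" using i CI_zero[OF CI] by (simp add: Ups_def)
    show ?thesis unfolding Cfun_def
      using z mono[of i] Lb_cont[OF mono fin[OF i]] CI_nonneg[OF CI]
      by (auto simp: Ups_def)
  qed
  moreover have "Ups I \<psi> i = (\<lambda>_. 0)" if "i \<notin> {1..I}" for i
    using that by (auto simp: Ups_def)
  ultimately show ?thesis by (auto simp: CI_def)
qed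

lemma Ups_DDbar: "\<psi> \<in> DD I \<Longrightarrow> Ups I \<psi> \<in> DDbar I"
  using Ups_CI DD_iff[of \<psi> I] by (auto simp: DDbar_iff DD_def)

lemma Ups_inj: "inj_on (Ups I) (FF I)"
proof (rule inj_onI)
  fix \<psi> \<psi>' assume psi: "\<psi> \<in> FF I" and psi': "\<psi>' \<in> FF I" and eq: "Ups I \<psi> = Ups I \<psi>'"
  define f where "f = Ups I \<psi>"
  have fm: "\<And>i a b. a \<le> b \<Longrightarrow> f i a \<le> f i b" unfolding f_def using Ups_mono_all[OF psi] by blast
  have key: "u = Uf I f (phi I \<xi> I u) \<and> (\<forall>i\<in>{1..I}. phi I \<xi> i u = Zf I f i (phi I \<xi> I u))"
    if chi: "\<xi> \<in> FF I" "Ups I \<xi> = f" and u: "0 \<le> u" and I: "1 \<le> I" for \<xi> u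
  proof -
    have "\<forall>i\<in>{1..I}. phi I \<xi> i u = u - (\<Sum>j=1..I. 2 * real (min i j) * f j (phi I \<xi> j u))"
    proof
      fix i assume "i \<in> {1..I}"
      have "(\<Sum>j=1..I. 2 * real (min i j) * \<xi> j u) = (\<Sum>j=1..I. 2 * real (min i j) * f j (phi I \<xi> j u))"
        by (intro sum.cong refl) (use Ups_phi[OF chi(1) _ u] chi(2) in auto)
      then show "phi I \<xi> i u = u - (\<Sum>j=1..I. 2 * real (min i j) * f j (phi I \<xi> j u))"
        by (simp add: phi_def)
    qed
    from sys_unique[where z="\<lambda>i. phi I \<xi> i u" and u=u and f=f and I=I, OF I this] show ?thesis by blast
  qed
  have "\<psi> i u = \<psi>' i u" for i u
  proof (cases "i \<in> {1..I} \<and> 0 \<le> u")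
    case True
    then have I: "1 \<le> I" and i: "i \<in> {1..I}" and u: "0 \<le> u" by auto
    have e2: "Ups I \<psi>' = f" using eq f_def by simp
    note k1 = key[OF psi f_def[symmetric] u I] and k2' = key[OF psi' e2 u I]
    have "phi I \<psi> I u = phi I \<psi>' I u"
    proof (rule ccontr)
      assume ne: "phi I \<psi> I u \<noteq> phi I \<psi>' I u"
      have u1: "u = Uf I f (phi I \<psi> I u)" using k1 by blast
      have u2: "u = Uf I f (phi I \<psi>' I u)" using k2' by blast
      show False
      proof (cases "phi I \<psi> I u < phi I \<psi>' I u")
        case True
        then show False using Uf_mono_diff'[where f=f, OF fm, of "phi I \<psi> I u" "phi I \<psi>' I u" I] u1 u2 by linarith
      next
        case False
        then have "phi I \<psi>' I u < phi I \<psi> I u" using ne by linarith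
        then show False using Uf_mono_diff'[where f=f, OF fm, of "phi I \<psi>' I u" "phi I \<psi> I u" I] u1 u2 by linarith
      qed
    qed
    moreover have "phi I \<psi> i u = Zf I f i (phi I \<psi> I u)" using k1 i by blast
    moreover have "phi I \<psi>' i u = Zf I f i (phi I \<psi>' I u)" using k2' i by blast
    ultimately have pe: "phi I \<psi> i u = phi I \<psi>' i u" by simp
    have "\<psi> i u = Ups I \<psi> i (phi I \<psi> i u)" using Ups_phi[OF psi i u] by simp
    also have "\<dots> = Ups I \<psi>' i (phi I \<psi>' i u)" using eq pe by simp
    also have "\<dots> = \<psi>' i u" using Ups_phi[OF psi' i u] by simp
    finally show ?thesis .
  next
    case False
    have C1: "\<psi> \<in> CI I" "\<psi>' \<in> CI I" using psi psi' by (auto simp: FF_def)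
    show ?thesis
    proof (cases "i \<in> {1..I}")
      case True
      then have "u < 0" using False by auto
      then show ?thesis using C1 True unfolding CI_def by auto
    next
      case f2: False
      then show ?thesis using C1 unfolding CI_def by auto
    qed
  qed
  then show "\<psi> = \<psi>'" by (intro ext)
qed


lemma Cup_cong:
  assumes g: "Cup g" and eq: "\<And>u. 0 \<le> u \<Longrightarrow> g u = h u"
  shows "Cup h"
  unfolding Cup_def Cfun_def
proof (intro conjI allI impI)
  show "h 0 = 0" using g eq[of 0] by (simp add: Cup_def Cfun_def)
  have "continuous_on {0..} g = continuous_on {0..} h"
    by (rule continuous_on_cong) (auto intro: eq)
  then show "continuous_on {0..} h" using g by (simp add: Cup_def Cfun_def)
  show "mono_on {0..} h"
  proof (intro mono_onI)
    fix r s :: real assume rs: "r \<in> {0..}" "s \<in> {0..}" "r \<le> s"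
    then have "g r \<le> g s" using g unfolding Cup_def Cfun_def by (meson mono_onD)
    then show "h r \<le> h s" using eq rs by simp
  qed
  show "0 \<le> h u" if "0 \<le> u" for u using g eq[OF that] that unfolding Cup_def Cfun_def by metis
  show "strict_mono_on {0..} h"
  proof (intro strict_mono_onI)
    fix r s :: real assume rs: "r \<in> {0..}" "s \<in> {0..}" "r < s"
    then have "g r < g s" using g unfolding Cup_def by (meson strict_mono_onD)
    then show "h r < h s" using eq rs by simp
  qed
  have "filterlim g at_top at_top = filterlim h at_top at_top"
    by (rule filterlim_cong[OF refl refl]) (use eventually_mono[OF eventually_ge_at_top[of "0::real"] eq] in simp)
  then show "filterlim h at_top at_top" using g by (simp add: Cup_def)
qed

lemma Zf_top: "Zf I f I s = s"
  by (subst Zf.simps) simp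

lemma Ups_surj:
  assumes f: "f \<in> CI I"
  shows "\<exists>\<psi>\<in>FF I. Ups I \<psi> = f"
proof -
  define \<psi> where "\<psi> = (\<lambda>i u. if i \<in> {1..I} \<and> 0 \<le> u then f i (Zf I f i (Vf I f u)) else 0)"
  note VC = Vf_Cup[OF f]
  have phi_eq: "phi I \<psi> i u = Zf I f i (Vf I f u)" if u: "0 \<le> u" for i u
  proof -
    have "(\<Sum>j=1..I. 2 * real (min i j) * \<psi> j u) = (\<Sum>j=1..I. 2 * real (min i j) * f j (Zf I f j (Vf I f u)))"
      by (intro sum.cong refl) (use u in \<open>simp add: \<psi>_def\<close>)
    then have "phi I \<psi> i u = Uf I f (Vf I f u) - (\<Sum>j=1..I. 2 * real (min i j) * f j (Zf I f j (Vf I f u)))"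
      using Vf_props(2)[OF f u] by (simp add: phi_def)
    then show ?thesis using sys_exists by simp
  qed
  have V0: "Vf I f 0 = 0" using VC by (simp add: Cup_def Cfun_def)
  have comp_cont: "continuous_on {0..} (\<lambda>u. f i (Zf I f i (Vf I f u)))" if i: "i \<in> {1..I}" for i
  proof -
    have c1: "continuous_on {0..} (Vf I f)" using VC by (simp add: Cup_def Cfun_def)
    have c2: "continuous_on {0..} (Zf I f i)" by (rule Zf_cont[OF f])
    have c3: "continuous_on {0..} (f i)" using f i by (simp add: CI_def Cfun_def)
    have i1: "Vf I f ` {0..} \<subseteq> {0..}" using Vf_props(1)[OF f] by auto
    have i2: "Zf I f i ` {0..} \<subseteq> {0..}" using Zf_ge[OF f, of _ i] by (auto intro: order_trans)
    have "continuous_on {0..} (\<lambda>u. Zf I f i (Vf I f u))"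
      using continuous_on_compose2[OF c2 c1 i1] .
    moreover have "(\<lambda>u. Zf I f i (Vf I f u)) ` {0..} \<subseteq> {0..}" using i1 i2 by auto
    ultimately show ?thesis using continuous_on_compose2[OF c3] by blast
  qed
  have CIp: "\<psi> \<in> CI I"
    unfolding CI_def
  proof (intro CollectI conjI)
    show "\<forall>i. i \<notin> {1..I} \<longrightarrow> \<psi> i = (\<lambda>_. 0)" by (auto simp: \<psi>_def)
    show "\<forall>i\<in>{1..I}. Cfun (\<psi> i) \<and> (\<forall>u<0. \<psi> i u = 0)"
    proof (intro ballI conjI)
    fix i assume i: "i \<in> {1..I}"
    show "\<forall>u<0. \<psi> i u = 0" by (simp add: \<psi>_def)
    show "Cfun (\<psi> i)" unfolding Cfun_def
    proof (intro conjI allI impI)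
      show "\<psi> i 0 = 0" using i V0 by (simp add: \<psi>_def Zf_zero[OF f] CI_zero[OF f])
      show "continuous_on {0..} (\<psi> i)"
        using continuous_on_cong[of "{0..}" "{0..}" "\<psi> i" "\<lambda>u. f i (Zf I f i (Vf I f u))"] comp_cont[OF i] i
        by (simp add: \<psi>_def)
      show "mono_on {0..} (\<psi> i)"
      proof (intro mono_onI)
        fix r s :: real assume rs: "r \<in> {0..}" "s \<in> {0..}" "r \<le> s"
        then have "Vf I f r \<le> Vf I f s" using Cup_le[OF VC] by simp
        then have "Zf I f i (Vf I f r) \<le> Zf I f i (Vf I f s)" by (rule Zf_mono[OF f])
        then have "f i (Zf I f i (Vf I f r)) \<le> f i (Zf I f i (Vf I f s))" by (rule CI_mono[OF f])
        then show "\<psi> i r \<le> \<psi> i s" using rs i by (simp add: \<psi>_def)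
      qed
      show "0 \<le> \<psi> i u" for u by (simp add: \<psi>_def CI_nonneg[OF f])
    qed
    qed
  qed
  have "Cup (phi I \<psi> I)"
    by (rule Cup_cong[OF VC]) (simp add: phi_eq Zf_top)
  then have FF: "\<psi> \<in> FF I" using CIp by (simp add: FF_def)
  have "Ups I \<psi> i z = f i z" for i z
  proof (cases "i \<in> {1..I} \<and> 0 \<le> z")
    case True
    then have i: "i \<in> {1..I}" and z: "0 \<le> z" by auto
    note C = phi_Cup[OF FF i]
    define u where "u = inv_into {0..} (phi I \<psi> i) z"
    have u: "0 \<le> u" "phi I \<psi> i u = z" using Cup_inv[OF C z] by (auto simp: u_def)
    have "Ups I \<psi> i z = \<psi> i u" using True by (simp add: Ups_def u_def)
    also have "\<dots> = f i (Zf I f i (Vf I f u))" using i u by (simp add: \<psi>_def)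
    also have "\<dots> = f i z" using phi_eq[OF u(1), of i] u(2) by simp
    finally show ?thesis .
  next
    case False
    then show ?thesis
    proof (cases "i \<in> {1..I}")
      case True
      then show ?thesis using False f by (auto simp: Ups_def CI_def)
    next
      case f2: False
      then show ?thesis using f by (auto simp: Ups_def CI_def)
    qed
  qed
  then have "Ups I \<psi> = f" by (intro ext)
  then show ?thesis using FF by blast
qed


lemma theta_CI:
  assumes f: "f \<in> CI I" and t: "0 \<le> t"
  shows "theta t f \<in> CI I"
  unfolding CI_def
proof (intro CollectI conjI)
  show "\<forall>i. i \<notin> {1..I} \<longrightarrow> theta t f i = (\<lambda>_. 0)"
    using f by (auto simp: CI_def theta_def fun_eq_iff)
  show "\<forall>i\<in>{1..I}. Cfun (theta t f i) \<and> (\<forall>u<0. theta t f i u = 0)"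
  proof (intro ballI conjI)
    fix i assume i: "i \<in> {1..I}"
    have it: "0 \<le> real i * t" using t by simp
    show "\<forall>u<0. theta t f i u = 0"
    proof (intro allI impI)
      fix u :: real assume "u < 0"
      then have "max (u - real i * t) 0 = 0" using it by simp
      then show "theta t f i u = 0" by (simp add: theta_def CI_zero[OF f])
    qed
    show "Cfun (theta t f i)" unfolding Cfun_def
    proof (intro conjI allI impI)
      have "max (0 - real i * t) 0 = 0" using it by simp
      then show "theta t f i 0 = 0" by (simp add: theta_def CI_zero[OF f])
      have c1: "continuous_on {0..} (\<lambda>z::real. max (z - real i * t) 0)"
        by (intro continuous_intros)
      have c2: "continuous_on {0..} (f i)" using f i by (simp add: CI_def Cfun_def)
      have "(\<lambda>z::real. max (z - real i * t) 0) ` {0..} \<subseteq> {0..}" by auto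
      then show "continuous_on {0..} (theta t f i)"
        unfolding theta_def using continuous_on_compose2[OF c2 c1] by blast
      show "mono_on {0..} (theta t f i)"
        by (intro mono_onI) (simp add: theta_def CI_mono[OF f])
      show "0 \<le> theta t f i u" for u by (simp add: theta_def CI_nonneg[OF f])
    qed
  qed
qed

lemma quot_aux:
  fixes a b w1 w2 z1 z2 q :: real
  assumes "z1 \<noteq> z2" "\<bar>w1 - w2\<bar> \<le> \<bar>z1 - z2\<bar>" "a - b = q * (w1 - w2)" "0 \<le> q"
  shows "(a - b) / (z1 - z2) \<le> q"
proof -
  have "\<bar>(w1 - w2) / (z1 - z2)\<bar> \<le> 1" using assms(1,2) by (simp add: abs_divide divide_le_eq_1)
  then have r: "(w1 - w2) / (z1 - z2) \<le> 1" by linarith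
  have "(a - b) / (z1 - z2) = q * ((w1 - w2) / (z1 - z2))" using assms(3) by simp
  also have "\<dots> \<le> q * 1" using r assms(4) by (intro mult_left_mono) auto
  finally show ?thesis by simp
qed

lemma theta_Lb:
  assumes f: "f \<in> CI I" and t: "0 \<le> t"
  shows "Lb (theta t f i) \<le> Lb (f i)"
  unfolding Lb_def[of "theta t f i"]
proof (rule SUP_least)
  fix p :: "real \<times> real" assume "p \<in> {(z1, z2). 0 \<le> z1 \<and> 0 \<le> z2 \<and> z1 \<noteq> z2}"
  then obtain z1 z2 :: real where p: "p = (z1, z2)" "0 \<le> z1" "0 \<le> z2" "z1 \<noteq> z2" by auto
  have mono: "mono_on {0..} (f i)" by (intro mono_onI CI_mono[OF f])
  define w1 where "w1 = max (z1 - real i * t) 0"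
  define w2 where "w2 = max (z2 - real i * t) 0"
  have th: "theta t f i z1 = f i w1" "theta t f i z2 = f i w2" by (simp_all add: theta_def w1_def w2_def)
  show "(case p of (z1, z2) \<Rightarrow> ereal ((theta t f i z1 - theta t f i z2) / (z1 - z2))) \<le> Lb (f i)"
  proof (cases "w1 = w2")
    case True
    then show ?thesis using p th Lb_nonneg[OF mono] by (simp add: zero_ereal_def[symmetric])
  next
    case False
    define q where "q = (f i w1 - f i w2) / (w1 - w2)"
    have "ereal q \<le> Lb (f i)" unfolding Lb_def q_def
      by (rule SUP_upper2[of "(w1, w2)"]) (use False in \<open>auto simp: w1_def w2_def\<close>)
    moreover have q0: "0 \<le> q"
    proof (cases "w1 \<le> w2")
      case True
      then have "f i w1 \<le> f i w2" using CI_mono[OF f] by blast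
      then show ?thesis using True False unfolding q_def by (intro divide_nonpos_nonpos) auto
    next
      case c: False
      then have "f i w2 \<le> f i w1" using CI_mono[OF f] by simp
      then show ?thesis using c unfolding q_def by (intro divide_nonneg_nonneg) auto
    qed
    moreover have "(f i w1 - f i w2) / (z1 - z2) \<le> q"
    proof (rule quot_aux[OF p(4) _ _ q0])
      show "\<bar>w1 - w2\<bar> \<le> \<bar>z1 - z2\<bar>" unfolding w1_def w2_def by (auto simp: max_def abs_if)
      show "f i w1 - f i w2 = q * (w1 - w2)" using False unfolding q_def by simp
    qed
    ultimately show ?thesis using p th by (simp add: order_trans[rotated])
  qed
qed

lemma theta_DDbar:
  assumes f: "f \<in> DDbar I" and t: "0 \<le> t"
  shows "theta t f \<in> DDbar I"
proof -
  have CI: "f \<in> CI I" and s: "(\<Sum>i=1..I. ereal (real i) * Lb (f i)) < ereal (1/2)"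
    using f by (auto simp: DDbar_iff)
  have "(\<Sum>i=1..I. ereal (real i) * Lb (theta t f i)) \<le> (\<Sum>i=1..I. ereal (real i) * Lb (f i))"
    by (intro sum_mono ereal_mult_left_mono theta_Lb[OF CI t]) auto
  then show ?thesis using s theta_CI[OF CI t] by (simp add: DDbar_iff)
qed

theorem proposition3p8:
  fixes I :: nat
  shows "bij_betw (Ups I) (DD I) (DDbar I) \<and>
         (\<forall>t\<ge>0. theta t ` DDbar I \<subseteq> DDbar I) \<and>
         (\<forall>t\<ge>0. (the_inv_into (FF I) (Ups I) \<circ> theta t \<circ> Ups I) ` DD I \<subseteq> DD I)"
proof (intro conjI allI impI)
  have DDFF: "DD I \<subseteq> FF I" by (auto simp: DD_def)
  have pre: "\<exists>\<psi>\<in>DD I. Ups I \<psi> = f" if f: "f \<in> DDbar I" for f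
  proof -
    have "f \<in> CI I" using f by (simp add: DDbar_iff)
    then obtain \<psi> where psi: "\<psi> \<in> FF I" "Ups I \<psi> = f" using Ups_surj by blast
    then have "\<psi> \<in> DD I" using DD_iff[OF psi(1)] f by (simp add: DDbar_iff)
    then show ?thesis using psi by blast
  qed
  show "bij_betw (Ups I) (DD I) (DDbar I)"
    unfolding bij_betw_def
  proof
    show "inj_on (Ups I) (DD I)" using inj_on_subset[OF Ups_inj DDFF] .
    show "Ups I ` DD I = DDbar I" using Ups_DDbar pre by blast
  qed
  show "theta t ` DDbar I \<subseteq> DDbar I" if "0 \<le> t" for t using theta_DDbar[OF _ that] by blast
  show "(the_inv_into (FF I) (Ups I) \<circ> theta t \<circ> Ups I) ` DD I \<subseteq> DD I" if t: "0 \<le> t" for t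
  proof
    fix x assume "x \<in> (the_inv_into (FF I) (Ups I) \<circ> theta t \<circ> Ups I) ` DD I"
    then obtain \<psi> where psi: "\<psi> \<in> DD I" and x: "x = the_inv_into (FF I) (Ups I) (theta t (Ups I \<psi>))" by auto
    have "theta t (Ups I \<psi>) \<in> DDbar I" using theta_DDbar[OF Ups_DDbar[OF psi] t] .
    then obtain \<psi>' where psi': "\<psi>' \<in> DD I" "Ups I \<psi>' = theta t (Ups I \<psi>)" using pre by blast
    have "x = \<psi>'" using x psi'(2)[symmetric] the_inv_into_f_f[OF Ups_inj] psi'(1) DDFF by auto
    then show "x \<in> DD I" using psi' by simp
  qed
qed

end
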